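(* Let $\Gamma$ be a ring of loops: vertices $w_1,\dots,w_r$ ($r\ge 2$) arranged cyclically, where each pair of cyclically consecutive vertices $w_j,w_{j+1}$ (indices mod $r$) is joined by two parallel edges of equal length, forming a loop of length $\lambda_j$. Suppose the distinct loop lengths are $L_1,\dots,L_m$, with $L_i$ occurring $n_i$ times, and $L=\sum_j\lambda_j$. Then, with standard vertex conditions, the eigenfrequencies of $\mathbf{L}(\Gamma)$ are $0$ with multiplicity one, $4\pi N/L$ with multiplicity two for each positive integer $N$, and $2\pi N/L_i$ with multiplicity $n_i$ for each $i$ and positive integer $N$ (multiplicities adding when values coincide); equivalently the secular equation is $\Sigma(k)=\left(-1+e^{ikL/2}\right)^2\prod_{i=1}^m\left(-1+e^{iL_ik}\right)^{n_i}$. In particular the spectrum does not depend on the order of the loops around the ring.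
   Context: On each edge the operator is $\mathbf{L}=-\frac{d^2}{dx^2}$ with standard (Neumann–Kirchhoff) vertex conditions: continuity at each vertex and vanishing sum of outward normal derivatives. Eigenvalues are $\lambda=k^2$, $k\ge0$. *)

theory Defs
  imports "HOL-Analysis.Analysis" "HOL-Library.Function_Algebras"
begin

text \<open>A finite metric graph with edges 0..<nE; edge e is the interval [0, len e],
  with x = 0 at vertex src e and x = len e at vertex tgt e.
  A function on the graph is F :: nat \<Rightarrow> real \<Rightarrow> real, F e being the
  restriction to edge e (required to vanish off the graph so that the
  eigenspace is a genuine subspace of the function space).\<close>

definition std_eigenfunction ::
  "nat \<Rightarrow> (nat \<Rightarrow> nat) \<Rightarrow> (nat \<Rightarrow> nat) \<Rightarrow> (nat \<Rightarrow> real) \<Rightarrow> real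
     \<Rightarrow> (nat \<Rightarrow> real \<Rightarrow> real) \<Rightarrow> bool" where
  "std_eigenfunction nE src tgt len k F \<longleftrightarrow>
     (\<forall>e x. (e \<ge> nE \<or> x \<notin> {0..len e}) \<longrightarrow> F e x = 0) \<and>
     (\<exists>D :: nat \<Rightarrow> real \<Rightarrow> real.
        (\<forall>e<nE. \<forall>x\<in>{0..len e}.
           (F e has_real_derivative D e x) (at x within {0..len e}) \<and>
           (D e has_real_derivative (- (k\<^sup>2 * F e x))) (at x within {0..len e})) \<and>
        (\<forall>v. \<exists>c. \<forall>e<nE. (src e = v \<longrightarrow> F e 0 = c) \<and> (tgt e = v \<longrightarrow> F e (len e) = c)) \<and>
        (\<forall>v. (\<Sum>e | e < nE \<and> src e = v. - D e 0)
             + (\<Sum>e | e < nE \<and> tgt e = v. D e (len e)) = 0))"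

definition std_eigenspace ::
  "nat \<Rightarrow> (nat \<Rightarrow> nat) \<Rightarrow> (nat \<Rightarrow> nat) \<Rightarrow> (nat \<Rightarrow> real) \<Rightarrow> real
     \<Rightarrow> (nat \<Rightarrow> real \<Rightarrow> real) set" where
  "std_eigenspace nE src tgt len k = {F. std_eigenfunction nE src tgt len k F}"

definition multiplicity_std ::
  "nat \<Rightarrow> (nat \<Rightarrow> nat) \<Rightarrow> (nat \<Rightarrow> nat) \<Rightarrow> (nat \<Rightarrow> real) \<Rightarrow> real \<Rightarrow> nat" where
  "multiplicity_std nE src tgt len k =
     vector_space.dim (\<lambda>(c::real) (F :: nat \<Rightarrow> real \<Rightarrow> real). \<lambda>e x. c * F e x)
       (std_eigenspace nE src tgt len k)"

text \<open>Ring of loops with r vertices 0..<r and loop lengths lam 0 .. lam (r-1):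
  edges 2j and 2j+1 both run from vertex j to vertex (j+1) mod r, each of length lam j / 2.\<close>
definition ring_tl :: "nat \<Rightarrow> nat \<Rightarrow> nat" where "ring_tl r e = e div 2"
definition ring_hd :: "nat \<Rightarrow> nat \<Rightarrow> nat" where "ring_hd r e = (e div 2 + 1) mod r"
definition ring_len :: "(nat \<Rightarrow> real) \<Rightarrow> nat \<Rightarrow> real" where "ring_len lam e = lam (e div 2) / 2"

end

theory Submission
  imports Defs
begin


lemma ode_unique:
  fixes f d :: "real \<Rightarrow> real" and k l :: real
  assumes k: "k \<noteq> 0"
  and H: "\<forall>x\<in>{0..l}. (f has_real_derivative d x) (at x within {0..l}) \<and>
            (d has_real_derivative -(k\<^sup>2*f x)) (at x within {0..l})"
  and x: "x \<in> {0..l}"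
  shows "f x = f 0 * cos(k*x) + d 0 / k * sin(k*x) \<and> d x = - k * f 0 * sin(k*x) + d 0 * cos(k*x)"
proof -
  define h where "h x = f x - (f 0 * cos(k*x) + d 0 / k * sin(k*x))" for x
  define h' where "h' x = d x - (- k * f 0 * sin(k*x) + d 0 * cos(k*x))" for x
  define E where "E x = (h' x)\<^sup>2 + k\<^sup>2 * (h x)\<^sup>2" for x
  have "\<exists>c. \<forall>y\<in>{0..l}. E y = c"
  proof (rule has_field_derivative_zero_constant)
    fix y assume y: "y \<in> {0..l}"
    have fy: "(f has_real_derivative d y) (at y within {0..l})" and dy: "(d has_real_derivative -(k\<^sup>2*f y)) (at y within {0..l})"
      using H y by auto
    have "(h has_real_derivative (d y - (f 0 * (-sin(k*y)*(k*1)) + d 0/k*(cos(k*y)*(k*1))))) (at y within {0..l})"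
      unfolding h_def by (auto intro!: derivative_eq_intros fy)
    moreover have "d y - (f 0 * (-sin(k*y)*(k*1)) + d 0/k*(cos(k*y)*(k*1))) = h' y"
      unfolding h'_def using k by simp
    ultimately have dh: "(h has_real_derivative h' y) (at y within {0..l})" by simp
    have "(h' has_real_derivative (-(k\<^sup>2*f y) - (- k * f 0 * (cos(k*y)*(k*1)) + d 0 * (-sin(k*y)*(k*1))))) (at y within {0..l})"
      unfolding h'_def by (auto intro!: derivative_eq_intros dy)
    moreover have "-(k\<^sup>2*f y) - (- k * f 0 * (cos(k*y)*(k*1)) + d 0 * (-sin(k*y)*(k*1))) = -(k\<^sup>2 * h y)"
      unfolding h_def using k by (simp add: field_simps power2_eq_square)
    ultimately have dh': "(h' has_real_derivative -(k\<^sup>2 * h y)) (at y within {0..l})" by simp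
    have "((\<lambda>x. h' x * h' x + k\<^sup>2 * (h x * h x)) has_real_derivative
       ((-(k\<^sup>2 * h y)) * h' y + (-(k\<^sup>2 * h y)) * h' y + k\<^sup>2 * (h' y * h y + h' y * h y))) (at y within {0..l})"
      by (intro DERIV_add DERIV_mult dh dh' DERIV_cmult)
    then show "(E has_real_derivative 0) (at y within {0..l})"
      unfolding E_def by (simp add: power2_eq_square algebra_simps)
  qed simp
  then obtain c where c: "\<forall>y\<in>{0..l}. E y = c" by blast
  have "0 \<in> {0..l}" using x by auto
  then have "E 0 = c" using c by blast
  moreover have "E 0 = 0" unfolding E_def h_def h'_def using k by simp
  ultimately have "E x = 0" using c x by simp
  then have "(h' x)\<^sup>2 = 0 \<and> k\<^sup>2 * (h x)\<^sup>2 = 0" unfolding E_def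
    using add_nonneg_eq_0_iff[of "(h' x)\<^sup>2" "k\<^sup>2 * (h x)\<^sup>2"] by simp
  then have "h' x = 0 \<and> h x = 0" using k by simp
  then show ?thesis unfolding h_def h'_def by simp
qed

lemma ode_unique0:
  fixes f d :: "real \<Rightarrow> real" and l :: real
  assumes H: "\<forall>x\<in>{0..l}. (f has_real_derivative d x) (at x within {0..l}) \<and>
            (d has_real_derivative -((0::real)\<^sup>2*f x)) (at x within {0..l})"
  and x: "x \<in> {0..l}"
  shows "f x = f 0 + d 0 * x \<and> d x = d 0"
proof -
  have "\<exists>c. \<forall>y\<in>{0..l}. d y = c"
  proof (rule has_field_derivative_zero_constant)
    fix y assume y: "y \<in> {0..l}"
    then have "(d has_real_derivative -((0::real)\<^sup>2*f y)) (at y within {0..l})" using H by blast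
    then show "(d has_real_derivative 0) (at y within {0..l})" by simp
  qed simp
  then obtain c where c: "\<forall>y\<in>{0..l}. d y = c" by blast
  have 0: "0 \<in> {0..l}" using x by auto
  have dc: "\<forall>y\<in>{0..l}. d y = d 0" using c 0 by auto
  have "\<exists>c. \<forall>y\<in>{0..l}. f y - d 0 * y = c"
  proof (rule has_field_derivative_zero_constant)
    fix y assume y: "y \<in> {0..l}"
    then have fy: "(f has_real_derivative d y) (at y within {0..l})" using H by blast
    have "((\<lambda>y. f y - d 0 * y) has_real_derivative d y - d 0 * 1) (at y within {0..l})"
      by (intro DERIV_diff fy DERIV_cmult DERIV_ident)
    then show "((\<lambda>y. f y - d 0 * y) has_real_derivative 0) (at y within {0..l})"
      using dc[rule_format, OF y] by simp
  qed simp
  then obtain c' where c': "\<forall>y\<in>{0..l}. f y - d 0 * y = c'" by blast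
  have "f x - d 0 * x = c'" "f 0 - d 0 * 0 = c'" using c'[rule_format, OF x] c'[rule_format, OF 0] by auto
  then show ?thesis using dc[rule_format, OF x] by simp
qed




definition nx :: "nat \<Rightarrow> nat \<Rightarrow> nat" where "nx r j = (if Suc j = r then 0 else Suc j)"
definition pv :: "nat \<Rightarrow> nat \<Rightarrow> nat" where "pv r v = (if v = 0 then r - 1 else v - 1)"

lemma hd_mod: "j < r \<Longrightarrow> (j + 1) mod r = nx r j"
  unfolding nx_def by auto

lemma nx_lt: "j < r \<Longrightarrow> nx r j < r" unfolding nx_def by auto
lemma pv_lt: "v < r \<Longrightarrow> pv r v < r" unfolding pv_def by auto
lemma nx_pv: "v < r \<Longrightarrow> nx r (pv r v) = v" unfolding nx_def pv_def by auto
lemma pv_nx: "j < r \<Longrightarrow> pv r (nx r j) = j" unfolding nx_def pv_def by auto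

lemma edge_cases: "(e::nat) = 2 * (e div 2) \<or> e = 2 * (e div 2) + 1" by presburger

lemma div2_eq: "((e::nat) div 2 = w) = (e = 2*w \<or> e = 2*w+1)" by presburger

lemma set1: "(v::nat) < r \<Longrightarrow> {e. e < 2*r \<and> e div 2 = v} = {2 * v, 2 * v + 1}"
  unfolding div2_eq by auto
lemma set1': "\<not> (v::nat) < r \<Longrightarrow> {e. e < 2*r \<and> e div 2 = v} = {}"
  by auto
lemma set2: fixes v r :: nat assumes "v < r" shows "{e. e < 2*r \<and> (e div 2 + 1) mod r = v} = {2 * pv r v, 2 * pv r v + 1}"
proof -
  have "(e < 2*r \<and> (e div 2 + 1) mod r = v) \<longleftrightarrow> e div 2 = pv r v" for e
  proof
    assume a: "e < 2*r \<and> (e div 2 + 1) mod r = v"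
    then have "e div 2 < r" by auto
    then have "nx r (e div 2) = v" using a hd_mod by metis
    then show "e div 2 = pv r v" using pv_nx \<open>e div 2 < r\<close> by metis
  next
    assume a: "e div 2 = pv r v"
    then have "e div 2 < r" using pv_lt assms by metis
    then have "e < 2 * r" by linarith
    moreover have "(e div 2 + 1) mod r = v" using hd_mod[OF \<open>e div 2 < r\<close>] a nx_pv assms by metis
    ultimately show "e < 2*r \<and> (e div 2 + 1) mod r = v" by blast
  qed
  then show ?thesis unfolding div2_eq by auto
qed
lemma set2': fixes v r :: nat assumes "\<not> v < r" "r > 0" shows "{e. e < 2*r \<and> (e div 2 + 1) mod r = v} = {}"
  using assms by auto

lemma cont_iff:
  fixes r :: nat and F :: "nat \<Rightarrow> real \<Rightarrow> real"
  assumes r: "r \<ge> 2"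
  shows "(\<forall>v. \<exists>c. \<forall>e<2*r. (e div 2 = v \<longrightarrow> F e 0 = c) \<and> ((e div 2 + 1) mod r = v \<longrightarrow> F e (lam (e div 2)/2) = c))
    \<longleftrightarrow> (\<forall>j<r. F (2*j) 0 = F (2*j+1) 0 \<and> F (2*j) (lam j/2) = F (2*j+1) (lam j/2) \<and> F (2*j) (lam j/2) = F (2*nx r j) 0)"
    (is "?L \<longleftrightarrow> ?R")
proof
  assume L: ?L
  show ?R
  proof (intro allI impI)
    fix j assume j: "j < r"
    obtain c where c: "\<forall>e<2*r. (e div 2 = j \<longrightarrow> F e 0 = c) \<and> ((e div 2 + 1) mod r = j \<longrightarrow> F e (lam (e div 2)/2) = c)"
      using L by blast
    have "F (2*j) 0 = c" using c[rule_format, of "2*j"] j by auto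
    moreover have "F (2*j+1) 0 = c" using c[rule_format, of "2*j+1"] j by auto
    moreover obtain c' where c': "\<forall>e<2*r. (e div 2 = nx r j \<longrightarrow> F e 0 = c') \<and> ((e div 2 + 1) mod r = nx r j \<longrightarrow> F e (lam (e div 2)/2) = c')"
      using L by blast
    have "F (2*j) (lam j/2) = c'" using c'[rule_format, of "2*j"] j hd_mod[OF j] by auto
    moreover have "F (2*j+1) (lam j/2) = c'" using c'[rule_format, of "2*j+1"] j hd_mod[OF j] by auto
    moreover have "F (2*nx r j) 0 = c'" using c'[rule_format, of "2*nx r j"] nx_lt[OF j] by auto
    ultimately show "F (2*j) 0 = F (2*j+1) 0 \<and> F (2*j) (lam j/2) = F (2*j+1) (lam j/2) \<and> F (2*j) (lam j/2) = F (2*nx r j) 0"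
      by simp
  qed
next
  assume R: ?R
  show ?L
  proof
    fix v
    show "\<exists>c. \<forall>e<2*r. (e div 2 = v \<longrightarrow> F e 0 = c) \<and> ((e div 2 + 1) mod r = v \<longrightarrow> F e (lam (e div 2)/2) = c)"
    proof (cases "v < r")
      case False
      then show ?thesis using r by auto
    next
      case True
      show ?thesis
      proof (intro exI allI impI conjI)
        fix e assume e: "e < 2*r"
        define j where "j = e div 2"
        have j: "j < r" using e j_def by auto
        have Rj: "F (2*j) 0 = F (2*j+1) 0 \<and> F (2*j) (lam j/2) = F (2*j+1) (lam j/2) \<and> F (2*j) (lam j/2) = F (2*nx r j) 0"
          using R j by blast
        have ee: "e = 2*j \<or> e = 2*j+1" using edge_cases j_def by blast
        have F0: "F e 0 = F (2*j) 0" using ee Rj by auto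
        have Fl: "F e (lam (e div 2)/2) = F (2*nx r j) 0" using ee Rj j_def by auto
        { assume "e div 2 = v" then show "F e 0 = F (2 * v) 0" using F0 j_def by simp }
        { assume "(e div 2 + 1) mod r = v"
          then have "nx r j = v" using hd_mod[OF j] j_def by simp
          then show "F e (lam (e div 2)/2) = F (2 * v) 0" using Fl by simp }
      qed
    qed
  qed
qed

lemma kirch_iff:
  fixes r :: nat and lam :: "nat \<Rightarrow> real" and D :: "nat \<Rightarrow> real \<Rightarrow> real"
  assumes r: "r \<ge> 2"
  shows "(\<forall>v. (\<Sum>e | e < 2*r \<and> e div 2 = v. - D e 0) + (\<Sum>e | e < 2*r \<and> (e div 2 + 1) mod r = v. D e (lam (e div 2)/2)) = (0::real))
    \<longleftrightarrow> (\<forall>j<r. D (2*nx r j) 0 + D (2*nx r j+1) 0 = D (2*j) (lam j/2) + D (2*j+1) (lam j/2))"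
    (is "?L \<longleftrightarrow> ?R")
proof -
  have eq: "((\<Sum>e | e < 2*r \<and> e div 2 = v. - D e 0) + (\<Sum>e | e < 2*r \<and> (e div 2 + 1) mod r = v. D e (lam (e div 2)/2)) = 0)
     \<longleftrightarrow> (v < r \<longrightarrow> D (2*nx r (pv r v)) 0 + D (2*nx r (pv r v)+1) 0 = D (2*pv r v) (lam (pv r v)/2) + D (2*pv r v+1) (lam (pv r v)/2))" for v
  proof (cases "v < r")
    case True
    have "(\<Sum>e | e < 2*r \<and> e div 2 = v. - D e 0) = - D (2 * v) 0 - D (2 * v+1) 0"
      unfolding set1[OF True] by simp
    moreover have "(\<Sum>e | e < 2*r \<and> (e div 2 + 1) mod r = v. D e (lam (e div 2)/2)) = D (2*pv r v) (lam (pv r v)/2) + D (2*pv r v+1) (lam (pv r v)/2)"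
      unfolding set2[OF True] by simp
    ultimately show ?thesis using True nx_pv[OF True] by auto
  next
    case False
    have "r > 0" using r by simp
    show ?thesis unfolding set1'[OF False] set2'[OF False \<open>r > 0\<close>] using False by simp
  qed
  show ?thesis
  proof
    assume L: ?L
    show ?R
    proof (intro allI impI)
      fix j assume j: "j < r"
      have "nx r j < r" using nx_lt[OF j] .
      then show "D (2*nx r j) 0 + D (2*nx r j+1) 0 = D (2*j) (lam j/2) + D (2*j+1) (lam j/2)"
        using L[rule_format, of "nx r j"] eq[of "nx r j"] pv_nx[OF j] by simp
    qed
  next
    assume R: ?R
    show ?L
    proof
      fix v
      show "(\<Sum>e | e < 2*r \<and> e div 2 = v. - D e 0) + (\<Sum>e | e < 2*r \<and> (e div 2 + 1) mod r = v. D e (lam (e div 2)/2)) = 0"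
        using eq[of v] R pv_lt[of v r] by blast
    qed
  qed
qed


abbreviation onG :: "nat \<Rightarrow> (nat \<Rightarrow> real) \<Rightarrow> nat \<Rightarrow> real \<Rightarrow> bool" where
  "onG r lam e x \<equiv> e < 2*r \<and> 0 \<le> x \<and> x \<le> lam (e div 2) / 2"

lemma ring_char:
  fixes r :: nat and lam :: "nat \<Rightarrow> real" and F :: "nat \<Rightarrow> real \<Rightarrow> real"
  assumes r: "r \<ge> 2"
  shows "std_eigenfunction (2*r) (ring_tl r) (ring_hd r) (ring_len lam) k F \<longleftrightarrow>
    (\<forall>e x. \<not> onG r lam e x \<longrightarrow> F e x = 0) \<and>
    (\<exists>D. (\<forall>e<2*r. \<forall>x\<in>{0..lam (e div 2) / 2}.
            (F e has_real_derivative D e x) (at x within {0..lam (e div 2)/2}) \<and>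
            (D e has_real_derivative -(k\<^sup>2*F e x)) (at x within {0..lam (e div 2)/2})) \<and>
        (\<forall>j<r. F (2*j) 0 = F (2*j+1) 0 \<and> F (2*j) (lam j/2) = F (2*j+1) (lam j/2) \<and> F (2*j) (lam j/2) = F (2*nx r j) 0) \<and>
        (\<forall>j<r. D (2*nx r j) 0 + D (2*nx r j+1) 0 = D (2*j) (lam j/2) + D (2*j+1) (lam j/2)))"
proof -
  have v: "(\<forall>e x. (e \<ge> 2*r \<or> x \<notin> {0..lam (e div 2)/2}) \<longrightarrow> F e x = 0) \<longleftrightarrow> (\<forall>e x. \<not> onG r lam e x \<longrightarrow> F e x = 0)"
    by auto
  show ?thesis
    unfolding std_eigenfunction_def ring_tl_def ring_hd_def ring_len_def
    by (simp only: v cont_iff[OF r] kirch_iff[OF r])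
qed




definition Pp :: "(nat \<Rightarrow> real) \<Rightarrow> nat \<Rightarrow> real" where "Pp lam j = (\<Sum>i<j. lam i) / 2"

lemma Pp_0[simp]: "Pp lam 0 = 0" unfolding Pp_def by simp
lemma Pp_Suc: "Pp lam (Suc j) = Pp lam j + lam j / 2" unfolding Pp_def by (simp add: field_simps)

definition Cb :: "nat \<Rightarrow> (nat \<Rightarrow> real) \<Rightarrow> real \<Rightarrow> nat \<Rightarrow> real \<Rightarrow> real" where
  "Cb r lam k = (\<lambda>e x. if onG r lam e x then cos (k * (Pp lam (e div 2) + x)) else 0)"
definition Sb :: "nat \<Rightarrow> (nat \<Rightarrow> real) \<Rightarrow> real \<Rightarrow> nat \<Rightarrow> real \<Rightarrow> real" where
  "Sb r lam k = (\<lambda>e x. if onG r lam e x then sin (k * (Pp lam (e div 2) + x)) else 0)"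
definition Gb :: "nat \<Rightarrow> (nat \<Rightarrow> real) \<Rightarrow> real \<Rightarrow> nat \<Rightarrow> nat \<Rightarrow> real \<Rightarrow> real" where
  "Gb r lam k j = (\<lambda>e x. if onG r lam e x \<and> e div 2 = j then (if even e then sin (k*x) else - sin (k*x)) else 0)"

lemma eig_from_smooth:
  fixes r :: nat and lam :: "nat \<Rightarrow> real" and F \<phi> \<psi> :: "nat \<Rightarrow> real \<Rightarrow> real"
  assumes r: "r \<ge> 2" and lampos: "\<forall>j<r. lam j > 0"
  and F_def: "\<And>e x. F e x = (if onG r lam e x then \<phi> e x else 0)"
  and ode: "\<And>e x. (\<phi> e has_real_derivative \<psi> e x) (at x) \<and> (\<psi> e has_real_derivative -(k\<^sup>2*\<phi> e x)) (at x)"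
  and cont: "\<And>j. j<r \<Longrightarrow> \<phi> (2*j) 0 = \<phi> (2*j+1) 0 \<and> \<phi> (2*j) (lam j/2) = \<phi> (2*j+1) (lam j/2) \<and> \<phi> (2*j) (lam j/2) = \<phi> (2*nx r j) 0"
  and kir: "\<And>j. j<r \<Longrightarrow> \<psi> (2*nx r j) 0 + \<psi> (2*nx r j+1) 0 = \<psi> (2*j) (lam j/2) + \<psi> (2*j+1) (lam j/2)"
  shows "std_eigenfunction (2*r) (ring_tl r) (ring_hd r) (ring_len lam) k F"
  unfolding ring_char[OF r]
proof (intro conjI exI[of _ \<psi>])
  show "\<forall>e x. \<not> onG r lam e x \<longrightarrow> F e x = 0"
  proof (intro allI impI)
    fix e x assume n: "\<not> onG r lam e x"
    have "F e x = (if onG r lam e x then \<phi> e x else 0)" by (rule F_def)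
    also have "\<dots> = 0" using n by (rule if_not_P)
    finally show "F e x = 0" .
  qed
  show "\<forall>e<2 * r. \<forall>x\<in>{0..lam (e div 2) / 2}.
          (F e has_real_derivative \<psi> e x) (at x within {0..lam (e div 2) / 2}) \<and>
          (\<psi> e has_real_derivative - (k\<^sup>2 * F e x)) (at x within {0..lam (e div 2) / 2})"
  proof (intro allI impI ballI conjI)
    fix e x assume e: "e < 2*r" and x: "x \<in> {0..lam (e div 2)/2}"
    have eq: "\<phi> e x' = F e x'" if "x' \<in> {0..lam (e div 2)/2}" for x'
      using F_def[of e x'] e that by auto
    have "(\<phi> e has_real_derivative \<psi> e x) (at x within {0..lam (e div 2)/2})"
      using ode has_field_derivative_at_within by blast
    then show "(F e has_real_derivative \<psi> e x) (at x within {0..lam (e div 2)/2})"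
      by (rule has_field_derivative_transform_within[where d=1]) (use x eq in auto)
    have "(\<psi> e has_real_derivative -(k\<^sup>2*\<phi> e x)) (at x within {0..lam (e div 2)/2})"
      using ode has_field_derivative_at_within by blast
    then show "(\<psi> e has_real_derivative -(k\<^sup>2*F e x)) (at x within {0..lam (e div 2)/2})"
      using eq[OF x] by simp
  qed
  show "\<forall>j<r. F (2*j) 0 = F (2*j+1) 0 \<and> F (2*j) (lam j/2) = F (2*j+1) (lam j/2) \<and> F (2*j) (lam j/2) = F (2*nx r j) 0"
  proof (intro allI impI)
    fix j assume j: "j < r"
    have lj: "lam j > 0" using lampos j by blast
    have nj: "nx r j < r" using nx_lt[OF j] .
    have "F (2*j) 0 = \<phi> (2*j) 0" "F (2*j+1) 0 = \<phi> (2*j+1) 0"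
         "F (2*j) (lam j/2) = \<phi> (2*j) (lam j/2)" "F (2*j+1) (lam j/2) = \<phi> (2*j+1) (lam j/2)"
         "F (2*nx r j) 0 = \<phi> (2*nx r j) 0"
      using F_def j lj nj lampos by auto
    then show "F (2*j) 0 = F (2*j+1) 0 \<and> F (2*j) (lam j/2) = F (2*j+1) (lam j/2) \<and> F (2*j) (lam j/2) = F (2*nx r j) 0"
      using cont[OF j] by simp
  qed
  show "\<forall>j<r. \<psi> (2*nx r j) 0 + \<psi> (2*nx r j+1) 0 = \<psi> (2*j) (lam j/2) + \<psi> (2*j+1) (lam j/2)"
    using kir by blast
qed

lemma wrap:
  fixes lam :: "nat \<Rightarrow> real"
  assumes j: "j < r" and c: "cos (k * Pp lam r) = 1" and s: "sin (k * Pp lam r) = 0"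
  shows "cos (k * (Pp lam j + lam j / 2)) = cos (k * Pp lam (nx r j))"
    "sin (k * (Pp lam j + lam j / 2)) = sin (k * Pp lam (nx r j))"
proof -
  have "Pp lam j + lam j / 2 = Pp lam (Suc j)" by (simp add: Pp_Suc)
  then show "cos (k * (Pp lam j + lam j / 2)) = cos (k * Pp lam (nx r j))"
    "sin (k * (Pp lam j + lam j / 2)) = sin (k * Pp lam (nx r j))"
    using c s unfolding nx_def by auto
qed

lemma Cb_eig:
  fixes r :: nat and lam :: "nat \<Rightarrow> real"
  assumes r: "r \<ge> 2" and lampos: "\<forall>j<r. lam j > 0"
    and c: "cos (k * Pp lam r) = 1" and s: "sin (k * Pp lam r) = 0"
  shows "std_eigenfunction (2*r) (ring_tl r) (ring_hd r) (ring_len lam) k (Cb r lam k)"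
proof (rule eig_from_smooth[OF r lampos, where \<phi> = "\<lambda>e x. cos (k * (Pp lam (e div 2) + x))"
      and \<psi> = "\<lambda>e x. - k * sin (k * (Pp lam (e div 2) + x))"])
  show "Cb r lam k e x = (if onG r lam e x then cos (k * (Pp lam (e div 2) + x)) else 0)" for e x
    unfolding Cb_def by simp
  show "((\<lambda>x. cos (k * (Pp lam (e div 2) + x))) has_real_derivative - k * sin (k * (Pp lam (e div 2) + x))) (at x) \<and>
        ((\<lambda>x. - k * sin (k * (Pp lam (e div 2) + x))) has_real_derivative - (k\<^sup>2 * cos (k * (Pp lam (e div 2) + x)))) (at x)" for e x
    by (auto intro!: derivative_eq_intros simp: power2_eq_square)
  fix j assume j: "j < r"
  show "cos (k * (Pp lam ((2*j) div 2) + 0)) = cos (k * (Pp lam ((2*j+1) div 2) + 0)) \<and>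
        cos (k * (Pp lam ((2*j) div 2) + lam j / 2)) = cos (k * (Pp lam ((2*j+1) div 2) + lam j / 2)) \<and>
        cos (k * (Pp lam ((2*j) div 2) + lam j / 2)) = cos (k * (Pp lam ((2*nx r j) div 2) + 0))"
    using wrap[OF j c s] by simp
  show "- k * sin (k * (Pp lam ((2*nx r j) div 2) + 0)) + - k * sin (k * (Pp lam ((2*nx r j+1) div 2) + 0)) =
        - k * sin (k * (Pp lam ((2*j) div 2) + lam j / 2)) + - k * sin (k * (Pp lam ((2*j+1) div 2) + lam j / 2))"
    using wrap[OF j c s] by simp
qed

lemma Sb_eig:
  fixes r :: nat and lam :: "nat \<Rightarrow> real"
  assumes r: "r \<ge> 2" and lampos: "\<forall>j<r. lam j > 0"
    and c: "cos (k * Pp lam r) = 1" and s: "sin (k * Pp lam r) = 0"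
  shows "std_eigenfunction (2*r) (ring_tl r) (ring_hd r) (ring_len lam) k (Sb r lam k)"
proof (rule eig_from_smooth[OF r lampos, where \<phi> = "\<lambda>e x. sin (k * (Pp lam (e div 2) + x))"
      and \<psi> = "\<lambda>e x. k * cos (k * (Pp lam (e div 2) + x))"])
  show "Sb r lam k e x = (if onG r lam e x then sin (k * (Pp lam (e div 2) + x)) else 0)" for e x
    unfolding Sb_def by simp
  show "((\<lambda>x. sin (k * (Pp lam (e div 2) + x))) has_real_derivative k * cos (k * (Pp lam (e div 2) + x))) (at x) \<and>
        ((\<lambda>x. k * cos (k * (Pp lam (e div 2) + x))) has_real_derivative - (k\<^sup>2 * sin (k * (Pp lam (e div 2) + x)))) (at x)" for e x
    by (auto intro!: derivative_eq_intros simp: power2_eq_square)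
  fix j assume j: "j < r"
  show "sin (k * (Pp lam ((2*j) div 2) + 0)) = sin (k * (Pp lam ((2*j+1) div 2) + 0)) \<and>
        sin (k * (Pp lam ((2*j) div 2) + lam j / 2)) = sin (k * (Pp lam ((2*j+1) div 2) + lam j / 2)) \<and>
        sin (k * (Pp lam ((2*j) div 2) + lam j / 2)) = sin (k * (Pp lam ((2*nx r j) div 2) + 0))"
    using wrap[OF j c s] by simp
  show "k * cos (k * (Pp lam ((2*nx r j) div 2) + 0)) + k * cos (k * (Pp lam ((2*nx r j+1) div 2) + 0)) =
        k * cos (k * (Pp lam ((2*j) div 2) + lam j / 2)) + k * cos (k * (Pp lam ((2*j+1) div 2) + lam j / 2))"
    using wrap[OF j c s] by simp
qed

lemma Gb_eig:
  fixes r :: nat and lam :: "nat \<Rightarrow> real"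
  assumes r: "r \<ge> 2" and lampos: "\<forall>j<r. lam j > 0"
    and s: "sin (k * (lam j0 / 2)) = 0"
  shows "std_eigenfunction (2*r) (ring_tl r) (ring_hd r) (ring_len lam) k (Gb r lam k j0)"
proof (rule eig_from_smooth[OF r lampos,
      where \<phi> = "\<lambda>e x. if e div 2 = j0 then (if even e then sin (k*x) else - sin (k*x)) else 0"
      and \<psi> = "\<lambda>e x. if e div 2 = j0 then (if even e then k * cos (k*x) else - (k * cos (k*x))) else 0"])
  show "Gb r lam k j0 e x = (if onG r lam e x then (if e div 2 = j0 then (if even e then sin (k*x) else - sin (k*x)) else 0) else 0)" for e x
    unfolding Gb_def by (cases "e div 2 = j0") simp_all
  fix e x
  show "((\<lambda>x. if e div 2 = j0 then (if even e then sin (k*x) else - sin (k*x)) else 0) has_real_derivative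
          (if e div 2 = j0 then (if even e then k * cos (k*x) else - (k * cos (k*x))) else 0)) (at x) \<and>
        ((\<lambda>x. if e div 2 = j0 then (if even e then k * cos (k*x) else - (k * cos (k*x))) else 0) has_real_derivative
          - (k\<^sup>2 * (if e div 2 = j0 then (if even e then sin (k*x) else - sin (k*x)) else 0))) (at x)"
    by (cases "e div 2 = j0"; cases "even e") (auto intro!: derivative_eq_intros simp: power2_eq_square)
next
  fix j assume j: "j < r"
  have ev1: "even (2*j)" "\<not> even (2*j+1)" "even (2 * nx r j)" "\<not> even (2 * nx r j + 1)" by auto
  show "(if (2*j) div 2 = j0 then (if even (2*j) then sin (k*0) else - sin (k*0)) else 0) =
          (if (2*j+1) div 2 = j0 then (if even (2*j+1) then sin (k*0) else - sin (k*0)) else 0) \<and>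
        (if (2*j) div 2 = j0 then (if even (2*j) then sin (k*(lam j/2)) else - sin (k*(lam j/2))) else 0) =
          (if (2*j+1) div 2 = j0 then (if even (2*j+1) then sin (k*(lam j/2)) else - sin (k*(lam j/2))) else 0) \<and>
        (if (2*j) div 2 = j0 then (if even (2*j) then sin (k*(lam j/2)) else - sin (k*(lam j/2))) else 0) =
          (if (2*nx r j) div 2 = j0 then (if even (2*nx r j) then sin (k*0) else - sin (k*0)) else 0)"
    using s ev1 by auto
  show "(if (2*nx r j) div 2 = j0 then (if even (2*nx r j) then k * cos (k*0) else - (k * cos (k*0))) else 0) +
        (if (2*nx r j+1) div 2 = j0 then (if even (2*nx r j+1) then k * cos (k*0) else - (k * cos (k*0))) else 0) =
        (if (2*j) div 2 = j0 then (if even (2*j) then k * cos (k*(lam j/2)) else - (k * cos (k*(lam j/2)))) else 0) +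
        (if (2*j+1) div 2 = j0 then (if even (2*j+1) then k * cos (k*(lam j/2)) else - (k * cos (k*(lam j/2)))) else 0)"
    using ev1 by auto
qed




lemma angle_id:
  fixes A B P x k :: real
  shows "(A * cos (k*P) + B * sin (k*P)) * cos (k*x) + (- A * sin (k*P) + B * cos (k*P)) * sin (k*x)
       = A * cos (k * (P + x)) + B * sin (k * (P + x))"
  by (simp add: distrib_left cos_add sin_add algebra_simps)

lemma angle_id2:
  fixes A B P x k :: real
  shows "- (A * cos (k*P) + B * sin (k*P)) * sin (k*x) + (- A * sin (k*P) + B * cos (k*P)) * cos (k*x)
       = - A * sin (k * (P + x)) + B * cos (k * (P + x))"
  by (simp add: distrib_left cos_add sin_add algebra_simps)

lemma span_pos:
  fixes r :: nat and lam :: "nat \<Rightarrow> real" and F :: "nat \<Rightarrow> real \<Rightarrow> real" and k :: real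
  assumes r: "r \<ge> 2" and lampos: "\<forall>j<r. lam j > 0" and k: "k > 0"
  and F: "std_eigenfunction (2*r) (ring_tl r) (ring_hd r) (ring_len lam) k F"
  shows "\<exists>A B \<alpha>. (\<forall>e x. F e x = A * Cb r lam k e x + B * Sb r lam k e x + (\<Sum>j<r. \<alpha> j * Gb r lam k j e x))
     \<and> ((A \<noteq> 0 \<or> B \<noteq> 0) \<longrightarrow> cos (k * Pp lam r) = 1) \<and> (\<forall>j<r. \<alpha> j \<noteq> 0 \<longrightarrow> sin (k * (lam j / 2)) = 0)"
proof -
  obtain D where van: "\<forall>e x. \<not> onG r lam e x \<longrightarrow> F e x = 0"
    and ode: "\<forall>e<2*r. \<forall>x\<in>{0..lam (e div 2) / 2}.
            (F e has_real_derivative D e x) (at x within {0..lam (e div 2)/2}) \<and>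
            (D e has_real_derivative -(k\<^sup>2*F e x)) (at x within {0..lam (e div 2)/2})"
    and cont: "\<forall>j<r. F (2*j) 0 = F (2*j+1) 0 \<and> F (2*j) (lam j/2) = F (2*j+1) (lam j/2) \<and> F (2*j) (lam j/2) = F (2*nx r j) 0"
    and kir: "\<forall>j<r. D (2*nx r j) 0 + D (2*nx r j+1) 0 = D (2*j) (lam j/2) + D (2*j+1) (lam j/2)"
    using F unfolding ring_char[OF r] by blast
  define a where "a e = F e 0" for e
  define b where "b e = D e 0 / k" for e
  have k0: "k \<noteq> 0" using k by simp
  have sol: "F e x = a e * cos(k*x) + b e * sin(k*x) \<and> D e x = k * (- a e * sin(k*x) + b e * cos(k*x))"
    if e: "e < 2*r" and x: "x \<in> {0..lam(e div 2)/2}" for e x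
  proof -
    have H: "\<forall>x\<in>{0..lam (e div 2)/2}. (F e has_real_derivative D e x) (at x within {0..lam (e div 2)/2}) \<and>
            (D e has_real_derivative -(k\<^sup>2*F e x)) (at x within {0..lam (e div 2)/2})"
      using ode e by blast
    have "F e x = F e 0 * cos(k*x) + D e 0 / k * sin(k*x) \<and> D e x = - k * F e 0 * sin(k*x) + D e 0 * cos(k*x)"
      by (rule ode_unique[OF k0 H x])
    then have h1: "F e x = F e 0 * cos(k*x) + D e 0 / k * sin(k*x)"
      and h2: "D e x = - k * F e 0 * sin(k*x) + D e 0 * cos(k*x)" by auto
    have kb: "k * (b e * cos(k*x)) = D e 0 * cos(k*x)" unfolding b_def using k0 by simp
    have "D e x = k * (- a e * sin(k*x) + b e * cos(k*x))"
      unfolding h2 distrib_left kb unfolding a_def by simp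
    then show ?thesis using h1 unfolding a_def b_def by simp
  qed
  define p where "p j = a (2*j)" for j
  define q where "q j = (b (2*j) + b (2*j+1)) / 2" for j
  define \<alpha> where "\<alpha> j = (b (2*j) - b (2*j+1)) / 2" for j
  have loc: "a (2*j+1) = a (2*j) \<and> \<alpha> j * sin (k*(lam j/2)) = 0 \<and>
     p (nx r j) = p j * cos (k*(lam j/2)) + q j * sin (k*(lam j/2)) \<and>
     q (nx r j) = - p j * sin (k*(lam j/2)) + q j * cos (k*(lam j/2))" if j: "j < r" for j
  proof -
    have lj: "lam j > 0" using lampos j by blast
    have nj: "nx r j < r" using nx_lt[OF j] .
    have d1: "(2*j) div 2 = j" "(2*j+1) div 2 = j" "(2*nx r j) div 2 = nx r j" "(2*nx r j+1) div 2 = nx r j" by auto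
    have e1: "2*j < 2*r" "2*j+1 < 2*r" "2*nx r j < 2*r" "2*nx r j+1 < 2*r" using j nj by auto
    have x1: "lam j / 2 \<in> {0..lam ((2*j) div 2)/2}" "lam j / 2 \<in> {0..lam ((2*j+1) div 2)/2}"
      "0 \<in> {0..lam ((2*j) div 2)/2}" "0 \<in> {0..lam ((2*j+1) div 2)/2}" using lj by auto
    note s1 = sol[OF e1(1) x1(1)] and s2 = sol[OF e1(2) x1(2)]
    have c: "F (2*j) 0 = F (2*j+1) 0" "F (2*j) (lam j/2) = F (2*j+1) (lam j/2)" "F (2*j) (lam j/2) = F (2*nx r j) 0"
      using cont j by auto
    have kk: "D (2*nx r j) 0 + D (2*nx r j+1) 0 = D (2*j) (lam j/2) + D (2*j+1) (lam j/2)" using kir j by auto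
    have a1: "a (2*j+1) = a (2*j)" using c(1) unfolding a_def by simp
    define C where "C = cos (k*(lam j/2))"
    define S where "S = sin (k*(lam j/2))"
    have f1: "F (2*j) (lam j/2) = p j * C + b (2*j) * S" using s1 unfolding p_def C_def S_def by simp
    have f2: "F (2*j+1) (lam j/2) = p j * C + b (2*j+1) * S" using s2 a1 unfolding p_def C_def S_def by simp
    have g1: "D (2*j) (lam j/2) = k * (- p j * S + b (2*j) * C)" using s1 unfolding p_def C_def S_def by simp
    have g2: "D (2*j+1) (lam j/2) = k * (- p j * S + b (2*j+1) * C)" using s2 a1 unfolding p_def C_def S_def by simp
    have h0: "D e 0 = k * b e" for e unfolding b_def using k0 by simp
    have pn: "p (nx r j) = F (2*nx r j) 0" unfolding p_def a_def by simp
    have A1: "\<alpha> j * S = 0" using c(2) f1 f2 unfolding \<alpha>_def by (simp add: algebra_simps)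
    have A2: "p (nx r j) = p j * C + q j * S"
      using c(2,3) f1 f2 pn unfolding q_def by (simp add: field_simps)
    have "k * (b (2*nx r j) + b (2*nx r j+1)) = k * (- 2 * p j * S + (b (2*j) + b (2*j+1)) * C)"
      using kk g1 g2 h0 by (simp add: algebra_simps)
    then have "b (2*nx r j) + b (2*nx r j+1) = - 2 * p j * S + (b (2*j) + b (2*j+1)) * C"
      using k0 by simp
    then have A3: "q (nx r j) = - p j * S + q j * C" unfolding q_def by (simp add: field_simps)
    show ?thesis using a1 A1 A2 A3 unfolding C_def S_def by simp
  qed
  define A where "A = p 0"
  define B where "B = q 0"
  have ind: "j < r \<Longrightarrow> p j = A * cos (k * Pp lam j) + B * sin (k * Pp lam j) \<and> q j = - A * sin (k * Pp lam j) + B * cos (k * Pp lam j)" for j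
  proof (induction j)
    case 0 then show ?case unfolding A_def B_def by simp
  next
    case (Suc j)
    then have j: "j < r" by simp
    have nxj: "nx r j = Suc j" using Suc.prems unfolding nx_def by simp
    have IH: "p j = A * cos (k * Pp lam j) + B * sin (k * Pp lam j)" "q j = - A * sin (k * Pp lam j) + B * cos (k * Pp lam j)"
      using Suc.IH j by auto
    have "p (Suc j) = p j * cos (k*(lam j/2)) + q j * sin (k*(lam j/2))"
         "q (Suc j) = - p j * sin (k*(lam j/2)) + q j * cos (k*(lam j/2))" using loc[OF j] nxj by auto
    then show ?case unfolding IH Pp_Suc by (simp add: distrib_left cos_add sin_add algebra_simps)
  qed
  define \<theta> where "\<theta> = k * Pp lam r"
  have clos: "A = A * cos \<theta> + B * sin \<theta> \<and> B = - A * sin \<theta> + B * cos \<theta>"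
  proof -
    have r1: "r - 1 < r" using r by simp
    have nx0: "nx r (r-1) = 0" unfolding nx_def using r by simp
    have PP: "Pp lam r = Pp lam (r-1) + lam (r-1) / 2" using Pp_Suc[of lam "r-1"] r by simp
    have "p 0 = p (r-1) * cos (k*(lam (r-1)/2)) + q (r-1) * sin (k*(lam (r-1)/2))"
         "q 0 = - p (r-1) * sin (k*(lam (r-1)/2)) + q (r-1) * cos (k*(lam (r-1)/2))"
      using loc[OF r1] nx0 by auto
    then have "A = (A * cos (k * Pp lam (r-1)) + B * sin (k * Pp lam (r-1))) * cos (k*(lam (r-1)/2))
                  + (- A * sin (k * Pp lam (r-1)) + B * cos (k * Pp lam (r-1))) * sin (k*(lam (r-1)/2))"
       "B = - (A * cos (k * Pp lam (r-1)) + B * sin (k * Pp lam (r-1))) * sin (k*(lam (r-1)/2))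
                  + (- A * sin (k * Pp lam (r-1)) + B * cos (k * Pp lam (r-1))) * cos (k*(lam (r-1)/2))"
      using ind[OF r1] unfolding A_def[symmetric] B_def[symmetric] by simp_all
    then show ?thesis unfolding angle_id angle_id2 \<theta>_def PP by simp
  qed
  have cl: "(A \<noteq> 0 \<or> B \<noteq> 0) \<longrightarrow> cos \<theta> = 1"
  proof
    assume nz: "A \<noteq> 0 \<or> B \<noteq> 0"
    have e1: "A * (1 - cos \<theta>) = B * sin \<theta>" and e2: "B * (1 - cos \<theta>) = - A * sin \<theta>"
      using clos by (simp_all add: algebra_simps)
    have "(A\<^sup>2 + B\<^sup>2) * (1 - cos \<theta>) = A * (A * (1 - cos \<theta>)) + B * (B * (1 - cos \<theta>))"
      by (simp add: power2_eq_square algebra_simps)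
    also have "\<dots> = A * (B * sin \<theta>) + B * (- A * sin \<theta>)" using e1 e2 by simp
    also have "\<dots> = 0" by simp
    finally have "(A\<^sup>2 + B\<^sup>2) * (1 - cos \<theta>) = 0" .
    moreover have "A\<^sup>2 + B\<^sup>2 \<noteq> 0" using nz by simp
    ultimately show "cos \<theta> = 1" by auto
  qed
  have pw: "F e x = A * Cb r lam k e x + B * Sb r lam k e x + (\<Sum>j<r. \<alpha> j * Gb r lam k j e x)" for e x
  proof (cases "onG r lam e x")
    case False
    have "F e x = 0" using van False by blast
    moreover have "Cb r lam k e x = 0" "Sb r lam k e x = 0" "\<And>j. Gb r lam k j e x = 0"
      unfolding Cb_def Sb_def Gb_def using False by auto
    ultimately show ?thesis by simp
  next
    case True
    define j where "j = e div 2"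
    have j: "j < r" using True j_def by auto
    have xin: "x \<in> {0..lam (e div 2)/2}" using True by auto
    have e: "e < 2*r" using True by simp
    define g where "g = (if even e then sin (k*x) else - sin (k*x))"
    have Gs: "(\<Sum>j'<r. \<alpha> j' * Gb r lam k j' e x) = \<alpha> j * g"
    proof -
      have "(\<Sum>j'<r. \<alpha> j' * Gb r lam k j' e x) = (\<Sum>j'<r. if j' = j then \<alpha> j * g else 0)"
        by (rule sum.cong) (use True in \<open>auto simp: Gb_def g_def j_def\<close>)
      also have "\<dots> = \<alpha> j * g" using j by simp
      finally show ?thesis .
    qed
    have CS: "Cb r lam k e x = cos (k * (Pp lam j + x))" "Sb r lam k e x = sin (k * (Pp lam j + x))"
      using True unfolding Cb_def Sb_def j_def by auto
    have Fe: "F e x = a e * cos(k*x) + b e * sin(k*x)" using sol[OF e xin] by simp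
    have ee: "e = 2*j \<or> e = 2*j+1" using edge_cases j_def by blast
    have ab: "a e = p j \<and> b e * sin (k*x) = q j * sin (k*x) + \<alpha> j * g"
      using ee loc[OF j] unfolding p_def q_def \<alpha>_def g_def by (auto simp: field_simps)
    have "F e x = p j * cos (k*x) + q j * sin (k*x) + \<alpha> j * g" using Fe ab by simp
    also have "p j * cos (k*x) + q j * sin (k*x) = A * cos (k * (Pp lam j + x)) + B * sin (k * (Pp lam j + x))"
      using ind[OF j] angle_id by simp
    finally show ?thesis using Gs CS by simp
  qed
  have al: "\<forall>j<r. \<alpha> j \<noteq> 0 \<longrightarrow> sin (k * (lam j / 2)) = 0" using loc by auto
  show ?thesis using pw cl al unfolding \<theta>_def by blast
qed




lemma Pp_pos: fixes r :: nat and lam :: "nat \<Rightarrow> real" assumes "r \<ge> 2" "\<forall>j<r. lam j > 0" shows "Pp lam r > 0"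
proof -
  have "{..<r} \<noteq> {}" using assms(1) by (auto simp: lessThan_empty_iff)
  then have "(\<Sum>i<r. lam i) > 0" using assms by (intro sum_pos) auto
  then show ?thesis unfolding Pp_def by simp
qed

lemma span_zero:
  fixes r :: nat and lam :: "nat \<Rightarrow> real" and F :: "nat \<Rightarrow> real \<Rightarrow> real"
  assumes r: "r \<ge> 2" and lampos: "\<forall>j<r. lam j > 0"
  and F: "std_eigenfunction (2*r) (ring_tl r) (ring_hd r) (ring_len lam) 0 F"
  shows "\<exists>A. \<forall>e x. F e x = A * Cb r lam 0 e x"
proof -
  obtain D where van: "\<forall>e x. \<not> onG r lam e x \<longrightarrow> F e x = 0"
    and ode: "\<forall>e<2*r. \<forall>x\<in>{0..lam (e div 2) / 2}.
            (F e has_real_derivative D e x) (at x within {0..lam (e div 2)/2}) \<and>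
            (D e has_real_derivative -((0::real)\<^sup>2*F e x)) (at x within {0..lam (e div 2)/2})"
    and cont: "\<forall>j<r. F (2*j) 0 = F (2*j+1) 0 \<and> F (2*j) (lam j/2) = F (2*j+1) (lam j/2) \<and> F (2*j) (lam j/2) = F (2*nx r j) 0"
    and kir: "\<forall>j<r. D (2*nx r j) 0 + D (2*nx r j+1) 0 = D (2*j) (lam j/2) + D (2*j+1) (lam j/2)"
    using F unfolding ring_char[OF r] by blast
  define a where "a e = F e 0" for e
  define b where "b e = D e 0" for e
  have sol: "F e x = a e + b e * x \<and> D e x = b e"
    if e: "e < 2*r" and x: "x \<in> {0..lam(e div 2)/2}" for e x
  proof -
    have H: "\<forall>x\<in>{0..lam (e div 2)/2}. (F e has_real_derivative D e x) (at x within {0..lam (e div 2)/2}) \<and>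
            (D e has_real_derivative -((0::real)\<^sup>2*F e x)) (at x within {0..lam (e div 2)/2})"
      using ode e by blast
    show ?thesis using ode_unique0[OF H x] unfolding a_def b_def .
  qed
  have loc: "a (2*j+1) = a (2*j) \<and> b (2*j+1) = b (2*j) \<and> a (2*nx r j) = a (2*j) + b (2*j) * (lam j/2) \<and>
     b (2*nx r j) + b (2*nx r j+1) = b (2*j) + b (2*j+1)" if j: "j < r" for j
  proof -
    have lj: "lam j > 0" using lampos j by blast
    have e1: "2*j < 2*r" "2*j+1 < 2*r" using j by auto
    have x1: "lam j / 2 \<in> {0..lam ((2*j) div 2)/2}" "lam j / 2 \<in> {0..lam ((2*j+1) div 2)/2}"
      using lj by auto
    note s1 = sol[OF e1(1) x1(1)] and s2 = sol[OF e1(2) x1(2)]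
    have c: "F (2*j) 0 = F (2*j+1) 0" "F (2*j) (lam j/2) = F (2*j+1) (lam j/2)" "F (2*j) (lam j/2) = F (2*nx r j) 0"
      using cont j by auto
    have kk: "D (2*nx r j) 0 + D (2*nx r j+1) 0 = D (2*j) (lam j/2) + D (2*j+1) (lam j/2)" using kir j by auto
    have a1: "a (2*j+1) = a (2*j)" using c(1) unfolding a_def by simp
    have "b (2*j) * (lam j/2) = b (2*j+1) * (lam j/2)" using c(2) s1 s2 a1 by simp
    then have b1: "b (2*j+1) = b (2*j)" using lj by simp
    have a2: "a (2*nx r j) = a (2*j) + b (2*j) * (lam j/2)" using c(3) s1 unfolding a_def by simp
    have "b (2*nx r j) + b (2*nx r j+1) = b (2*j) + b (2*j+1)" using kk s1 s2 unfolding b_def by simp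
    then show ?thesis using a1 b1 a2 by simp
  qed
  have bn: "b (2*nx r j) = b (2*j)" if j: "j < r" for j
    using loc[OF j] loc[OF nx_lt[OF j]] by simp
  have ind: "j < r \<Longrightarrow> b (2*j) = b 0 \<and> a (2*j) = a 0 + b 0 * Pp lam j" for j
  proof (induction j)
    case 0 then show ?case by simp
  next
    case (Suc j)
    then have j: "j < r" by simp
    have nxj: "nx r j = Suc j" using Suc.prems unfolding nx_def by simp
    show ?case using Suc.IH[OF j] loc[OF j] bn[OF j] nxj unfolding Pp_Suc by (simp add: algebra_simps)
  qed
  have r1: "r - 1 < r" using r by simp
  have nx0: "nx r (r-1) = 0" unfolding nx_def using r by simp
  have PP: "Pp lam r = Pp lam (r-1) + lam (r-1) / 2" using Pp_Suc[of lam "r-1"] r by simp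
  have "a 0 = a 0 + b 0 * Pp lam r"
    using loc[OF r1] ind[OF r1] nx0 unfolding PP by (simp add: algebra_simps)
  then have b0: "b 0 = 0" using Pp_pos[OF r lampos] by simp
  have "F e x = a 0 * Cb r lam 0 e x" for e x
  proof (cases "onG r lam e x")
    case False
    have "F e x = 0" using van False by blast
    moreover have "Cb r lam 0 e x = 0" unfolding Cb_def using False by auto
    ultimately show ?thesis by simp
  next
    case True
    define j where "j = e div 2"
    have j: "j < r" using True j_def by auto
    have xin: "x \<in> {0..lam (e div 2)/2}" using True by auto
    have e: "e < 2*r" using True by simp
    have ee: "e = 2*j \<or> e = 2*j+1" using edge_cases j_def by blast
    have "F e x = a e + b e * x" using sol[OF e xin] by simp
    also have "\<dots> = a 0" using ee ind[OF j] loc[OF j] b0 by auto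
    finally show ?thesis using True unfolding Cb_def by simp
  qed
  then show ?thesis by blast
qed




interpretation fvs: vector_space "\<lambda>(c::real) (F::nat \<Rightarrow> real \<Rightarrow> real). \<lambda>e x. c * F e x"
  by unfold_locales (simp_all add: fun_eq_iff algebra_simps)

lemma sum_apply2: "(sum g A) e x = (\<Sum>a\<in>A. g a e x)" for g :: "'b \<Rightarrow> nat \<Rightarrow> real \<Rightarrow> real"
  by (induction A rule: infinite_finite_induct) auto

lemma sym_iff:
  fixes k :: real and lam :: "nat \<Rightarrow> real"
  assumes k: "k > 0" and P: "Pp lam r > 0"
  shows "cos (k * Pp lam r) = 1 \<longleftrightarrow> (\<exists>N::nat. N > 0 \<and> k = 4 * pi * real N / (\<Sum>j<r. lam j))"
proof -
  have L: "(\<Sum>j<r. lam j) = 2 * Pp lam r" unfolding Pp_def by simp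
  show ?thesis
  proof
    assume "cos (k * Pp lam r) = 1"
    then obtain n :: int where n: "k * Pp lam r = of_int n * 2 * pi" using cos_one_2pi_int by blast
    have "k * Pp lam r > 0" using k P by simp
    then have "0 < of_int n * (2 * pi)" using n by (simp add: mult.assoc)
    then have "of_int n > (0::real)" using pi_gt_zero by (simp add: zero_less_mult_iff)
    then have n0: "n > 0" by simp
    have "k = 4 * pi * real (nat n) / (\<Sum>j<r. lam j)"
      unfolding L using n n0 P by (simp add: field_simps)
    then show "\<exists>N::nat. N > 0 \<and> k = 4 * pi * real N / (\<Sum>j<r. lam j)" using n0 by (intro exI[of _ "nat n"]) simp
  next
    assume "\<exists>N::nat. N > 0 \<and> k = 4 * pi * real N / (\<Sum>j<r. lam j)"
    then obtain N :: nat where N: "k = 4 * pi * real N / (\<Sum>j<r. lam j)" by blast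
    have "k * Pp lam r = of_int (int N) * 2 * pi" unfolding N L using P by (simp add: field_simps)
    then show "cos (k * Pp lam r) = 1" using cos_one_2pi_int by blast
  qed
qed

lemma anti_iff:
  fixes k l :: real
  assumes k: "k > 0" and l: "l > 0"
  shows "sin (k * (l / 2)) = 0 \<longleftrightarrow> (\<exists>N::nat. N > 0 \<and> k = 2 * pi * real N / l)"
proof
  assume "sin (k * (l / 2)) = 0"
  then obtain n :: int where n: "k * (l / 2) = of_int n * pi" using sin_zero_iff_int2 by blast
  have "k * (l/2) > 0" using k l by simp
  then have "0 < of_int n * pi" using n by (simp add: mult.commute)
  then have "of_int n > (0::real)" using pi_gt_zero by (simp add: zero_less_mult_iff)
  then have n0: "n > 0" by simp
  have "k = 2 * pi * real (nat n) / l" using n n0 l by (simp add: field_simps)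
  then show "\<exists>N::nat. N > 0 \<and> k = 2 * pi * real N / l" using n0 by (intro exI[of _ "nat n"]) simp
next
  assume "\<exists>N::nat. N > 0 \<and> k = 2 * pi * real N / l"
  then obtain N :: nat where N: "k = 2 * pi * real N / l" by blast
  have "k * (l / 2) = of_int (int N) * pi" unfolding N using l by (simp add: field_simps)
  then show "sin (k * (l / 2)) = 0" using sin_zero_iff_int2 by blast
qed

lemma count_lemma:
  fixes lam :: "nat \<Rightarrow> real"
  assumes "\<And>j. j < r \<Longrightarrow> P j \<longleftrightarrow> Q (lam j)"
  shows "card {j. j < r \<and> P j} = (\<Sum>Li\<in>lam ` {..<r}. if Q Li then card {j. j < r \<and> lam j = Li} else 0)"
proof -
  define A where "A Li = (if Q Li then {j. j < r \<and> lam j = Li} else {})" for Li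
  have "{j. j < r \<and> P j} = (\<Union>Li\<in>lam ` {..<r}. A Li)"
    unfolding A_def using assms by auto
  then have "card {j. j < r \<and> P j} = card (\<Union>Li\<in>lam ` {..<r}. A Li)" by simp
  also have "\<dots> = (\<Sum>Li\<in>lam ` {..<r}. card (A Li))"
    by (rule card_UN_disjoint) (auto simp: A_def)
  also have "\<dots> = (\<Sum>Li\<in>lam ` {..<r}. if Q Li then card {j. j < r \<and> lam j = Li} else 0)"
    by (rule sum.cong) (auto simp: A_def)
  finally show ?thesis .
qed




theorem mainTheorem7:
  fixes r :: nat and lam :: "nat \<Rightarrow> real" and k :: real
  assumes "r \<ge> 2"
    and "\<forall>j<r. lam j > 0"
    and "k \<ge> 0"
  defines "L \<equiv> (\<Sum>j<r. lam j)"
  shows "multiplicity_std (2 * r) (ring_tl r) (ring_hd r) (ring_len lam) k =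
           (if k = 0 then 1 else 0)
         + (if \<exists>N::nat. N > 0 \<and> k = 4 * pi * real N / L then 2 else 0)
         + (\<Sum>Li \<in> lam ` {..<r}.
              if \<exists>N::nat. N > 0 \<and> k = 2 * pi * real N / Li
              then card {j. j < r \<and> lam j = Li} else 0)"
proof -
  have r: "r \<ge> 2" and lampos: "\<forall>j<r. lam j > 0" using assms by auto
  have PP: "Pp lam r > 0" using Pp_pos[OF r lampos] .
  have Lp: "L = 2 * Pp lam r" unfolding L_def Pp_def by simp
  have Lpos: "L > 0" using PP Lp by simp
  define V where "V = std_eigenspace (2*r) (ring_tl r) (ring_hd r) (ring_len lam) k"
  have mult: "multiplicity_std (2 * r) (ring_tl r) (ring_hd r) (ring_len lam) k = fvs.dim V"
    unfolding multiplicity_std_def V_def ..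
  have lam0: "lam 0 > 0" using lampos r by simp
  have onG00: "onG r lam 0 0" using lam0 r by auto
  show ?thesis
  proof (cases "k = 0")
    case True
    have c1: "\<not> (\<exists>N::nat. N > 0 \<and> k = 4 * pi * real N / L)"
      using True Lpos by auto
    have c2: "(\<Sum>Li \<in> lam ` {..<r}. if \<exists>N::nat. N > 0 \<and> k = 2 * pi * real N / Li
              then card {j. j < r \<and> lam j = Li} else 0) = 0"
    proof (rule sum.neutral, intro ballI)
      fix Li assume "Li \<in> lam ` {..<r}"
      then have "Li > 0" using lampos by auto
      then have "\<not> (\<exists>N::nat. N > 0 \<and> k = 2 * pi * real N / Li)" using True by auto
      then show "(if \<exists>N::nat. N > 0 \<and> k = 2 * pi * real N / Li then card {j. j < r \<and> lam j = Li} else 0) = 0"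
        by (rule if_not_P)
    qed
    have "fvs.dim V = 1"
    proof (rule fvs.dim_unique[of "{Cb r lam 0}"])
      show "{Cb r lam 0} \<subseteq> V"
        unfolding V_def std_eigenspace_def True using Cb_eig[OF r lampos, of 0] by simp
      show "V \<subseteq> fvs.span {Cb r lam 0}"
      proof
        fix F assume "F \<in> V"
        then have "std_eigenfunction (2*r) (ring_tl r) (ring_hd r) (ring_len lam) 0 F"
          unfolding V_def std_eigenspace_def True by simp
        then obtain A where A: "\<forall>e x. F e x = A * Cb r lam 0 e x" using span_zero[OF r lampos] by blast
        have "F = (\<lambda>e x. A * Cb r lam 0 e x)" using A by (intro ext) simp
        moreover have "(\<lambda>e x. A * Cb r lam 0 e x) \<in> fvs.span {Cb r lam 0}"
          by (rule fvs.span_scale[OF fvs.span_base]) simp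
        ultimately show "F \<in> fvs.span {Cb r lam 0}" by simp
      qed
      show "fvs.independent {Cb r lam 0}"
      proof (rule fvs.independent_if_scalars_zero)
        fix f :: "(nat \<Rightarrow> real \<Rightarrow> real) \<Rightarrow> real" and b
        assume eq: "(\<Sum>x\<in>{Cb r lam 0}. (\<lambda>e xa. f x * x e xa)) = 0" and b: "b \<in> {Cb r lam 0}"
        have "f (Cb r lam 0) * Cb r lam 0 0 0 = 0" using fun_cong[OF fun_cong[OF eq, of 0], of 0] by simp
        moreover have "Cb r lam 0 0 0 = 1" unfolding Cb_def using onG00 by simp
        ultimately show "f b = 0" using b by simp
      qed simp
    qed simp
    then show ?thesis unfolding mult using True c1 c2 by simp
  next
    case False
    then have k: "k > 0" using assms(3) by simp
    define J where "J = {j. j < r \<and> sin (k * (lam j / 2)) = 0}"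
    define sym where "sym = (cos (k * Pp lam r) = 1)"
    define SB where "SB = (if sym then {Cb r lam k, Sb r lam k} else {})"
    define B where "B = SB \<union> Gb r lam k ` J"
    define x0 where "x0 = pi / (2 * k)"
    have kx0: "k * x0 = pi / 2" unfolding x0_def using k by simp
    have sx0: "sin (k * x0) = 1" unfolding kx0 by simp
    have x0pos: "x0 > 0" unfolding x0_def using k by simp
    have x0J: "x0 \<le> lam j / 2" if "j \<in> J" for j
    proof -
      have j: "j < r" "sin (k * (lam j / 2)) = 0" using that unfolding J_def by auto
      then obtain i :: int where i: "k * (lam j / 2) = of_int i * pi" using sin_zero_iff_int2 by blast
      have "k * (lam j / 2) > 0" using k lampos j by simp
      then have "0 < of_int i * pi" using i by (simp add: mult.commute)
      then have "of_int i > (0::real)" using pi_gt_zero by (simp add: zero_less_mult_iff)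
      then have "i > 0" by simp
      then have "of_int i \<ge> (1::real)" by simp
      then have "k * (lam j / 2) \<ge> pi" using i pi_gt_zero by (simp add: mult_le_cancel_right1)
      then have "k * x0 \<le> k * (lam j / 2)" using kx0 pi_gt_zero by linarith
      then show ?thesis using k by simp
    qed
    define dlt where "dlt j b = b (2*j) x0 - b (2*j+1) x0" for j and b :: "nat \<Rightarrow> real \<Rightarrow> real"
    have onJ: "onG r lam (2*j) x0" "onG r lam (2*j+1) x0" if "j \<in> J" for j
      using x0J[OF that] x0pos that unfolding J_def by auto
    have dC: "dlt j (Cb r lam k) = 0" "dlt j (Sb r lam k) = 0" if "j \<in> J" for j
      using onJ[OF that] unfolding dlt_def Cb_def Sb_def by auto
    have dG: "dlt j (Gb r lam k j') = (if j' = j then 2 else 0)" if "j \<in> J" for j j'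
      using onJ[OF that] sx0 unfolding dlt_def Gb_def by auto
    have GneC: "Gb r lam k j \<noteq> Cb r lam k" "Gb r lam k j \<noteq> Sb r lam k" if "j \<in> J" for j
      using dG[OF that, of j] dC[OF that] by auto
    have Ginj: "inj_on (Gb r lam k) J"
    proof (rule inj_onI)
      fix j j' assume j: "j \<in> J" and "j' \<in> J" and eq: "Gb r lam k j = Gb r lam k j'"
      have "dlt j (Gb r lam k j) = dlt j (Gb r lam k j')" using eq by simp
      then show "j = j'" using dG[OF j, of j] dG[OF j, of j'] by (auto split: if_splits)
    qed
    have ev00: "Cb r lam k 0 0 = 1" "Sb r lam k 0 0 = 0" "\<And>j. Gb r lam k j 0 0 = 0"
      using onG00 unfolding Cb_def Sb_def Gb_def by auto
    have CneS: "Cb r lam k \<noteq> Sb r lam k" using ev00 by (metis zero_neq_one)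
    define x1 where "x1 = min (lam 0 / 2) x0"
    have x1pos: "x1 > 0" unfolding x1_def using x0pos lam0 by auto
    have onx1: "onG r lam 0 x1" unfolding x1_def using x1pos x1_def r by auto
    have sx1: "sin (k * x1) > 0"
    proof (rule sin_gt_zero)
      show "0 < k * x1" using k x1pos by simp
      have "k * x1 \<le> k * x0" unfolding x1_def using k by (simp add: mult_left_mono)
      then show "k * x1 < pi" using kx0 pi_gt_zero by linarith
    qed
    have Sx1: "Sb r lam k 0 x1 = sin (k * x1)" using onx1 unfolding Sb_def by simp
    have finB: "finite B" unfolding B_def SB_def J_def by auto
    have cardSB: "card SB = (if sym then 2 else 0)" unfolding SB_def using CneS by auto
    have disj: "SB \<inter> Gb r lam k ` J = {}"
    proof (rule ccontr)
      assume "SB \<inter> Gb r lam k ` J \<noteq> {}"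
      then obtain c j where c: "c \<in> SB" and j: "j \<in> J" and cj: "c = Gb r lam k j" by blast
      have "c = Cb r lam k \<or> c = Sb r lam k" using c unfolding SB_def by (auto split: if_splits)
      then show False using GneC[OF j] cj by auto
    qed
    have cardB: "card B = card SB + card J"
      unfolding B_def using disj card_Un_disjoint[of SB "Gb r lam k ` J"] card_image[OF Ginj]
      unfolding SB_def J_def by auto
    have BV: "B \<subseteq> V"
    proof
      fix b assume "b \<in> B"
      then consider "sym" "b = Cb r lam k" | "sym" "b = Sb r lam k" | j where "j \<in> J" "b = Gb r lam k j"
        unfolding B_def SB_def by (auto split: if_splits)
      then show "b \<in> V"
      proof cases
        case 1
        have "sin (k * Pp lam r) = 0" using 1(1) sin_cos_squared_add[of "k * Pp lam r"] unfolding sym_def by simp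
        then show ?thesis unfolding V_def std_eigenspace_def 1 using Cb_eig[OF r lampos] 1(1) unfolding sym_def by simp
      next
        case 2
        have "sin (k * Pp lam r) = 0" using 2(1) sin_cos_squared_add[of "k * Pp lam r"] unfolding sym_def by simp
        then show ?thesis unfolding V_def std_eigenspace_def 2 using Sb_eig[OF r lampos] 2(1) unfolding sym_def by simp
      next
        case 3
        then show ?thesis unfolding V_def std_eigenspace_def using Gb_eig[OF r lampos] unfolding J_def by simp
      qed
    qed
    have VB: "V \<subseteq> fvs.span B"
    proof
      fix F assume "F \<in> V"
      then have "std_eigenfunction (2*r) (ring_tl r) (ring_hd r) (ring_len lam) k F"
        unfolding V_def std_eigenspace_def by simp
      then obtain A Bc \<alpha> where pw: "\<forall>e x. F e x = A * Cb r lam k e x + Bc * Sb r lam k e x + (\<Sum>j<r. \<alpha> j * Gb r lam k j e x)"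
        and cl: "(A \<noteq> 0 \<or> Bc \<noteq> 0) \<longrightarrow> cos (k * Pp lam r) = 1" and al: "\<forall>j<r. \<alpha> j \<noteq> 0 \<longrightarrow> sin (k * (lam j / 2)) = 0"
        using span_pos[OF r lampos k] by blast
      have Feq: "F = (\<lambda>e x. A * Cb r lam k e x) + (\<lambda>e x. Bc * Sb r lam k e x) + (\<Sum>j<r. (\<lambda>e x. \<alpha> j * Gb r lam k j e x))"
        by (intro ext) (simp add: sum_apply2 pw)
      have t1: "(\<lambda>e x. A * Cb r lam k e x) \<in> fvs.span B"
      proof (cases "A = 0")
        case True
        have z: "(\<lambda>e x. A * Cb r lam k e x) = 0" using True by (intro ext) simp
        show ?thesis unfolding z by (rule fvs.span_zero)
      next
        case False
        then have "Cb r lam k \<in> B" using cl unfolding B_def SB_def sym_def by auto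
        then show ?thesis by (rule fvs.span_scale[OF fvs.span_base])
      qed
      have t2: "(\<lambda>e x. Bc * Sb r lam k e x) \<in> fvs.span B"
      proof (cases "Bc = 0")
        case True
        have z: "(\<lambda>e x. Bc * Sb r lam k e x) = 0" using True by (intro ext) simp
        show ?thesis unfolding z by (rule fvs.span_zero)
      next
        case False
        then have "Sb r lam k \<in> B" using cl unfolding B_def SB_def sym_def by auto
        then show ?thesis by (rule fvs.span_scale[OF fvs.span_base])
      qed
      have t3: "(\<Sum>j<r. (\<lambda>e x. \<alpha> j * Gb r lam k j e x)) \<in> fvs.span B"
      proof (rule fvs.span_sum)
        fix j assume j: "j \<in> {..<r}"
        show "(\<lambda>e x. \<alpha> j * Gb r lam k j e x) \<in> fvs.span B"
        proof (cases "\<alpha> j = 0")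
          case True
          have z: "(\<lambda>e x. \<alpha> j * Gb r lam k j e x) = 0" using True by (intro ext) simp
          show ?thesis unfolding z by (rule fvs.span_zero)
        next
          case False
          then have "Gb r lam k j \<in> B" using al j unfolding B_def J_def by auto
          then show ?thesis by (rule fvs.span_scale[OF fvs.span_base])
        qed
      qed
      show "F \<in> fvs.span B" unfolding Feq using t1 t2 t3 by (intro fvs.span_add) auto
    qed
    have indep: "fvs.independent B"
    proof (rule fvs.independent_if_scalars_zero[OF finB])
      fix f :: "(nat \<Rightarrow> real \<Rightarrow> real) \<Rightarrow> real" and b
      assume eq: "(\<Sum>x\<in>B. (\<lambda>e xa. f x * x e xa)) = 0" and b: "b \<in> B"
      have ev: "(\<Sum>c\<in>B. f c * c e x) = 0" for e x
        using fun_cong[OF fun_cong[OF eq, of e], of x] by (simp add: sum_apply2)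
      have fG: "f (Gb r lam k j) = 0" if j: "j \<in> J" for j
      proof -
        have GB: "Gb r lam k j \<in> B" using j unfolding B_def by auto
        have "(\<Sum>c\<in>B. f c * dlt j c) = (\<Sum>c\<in>B. f c * c (2*j) x0) - (\<Sum>c\<in>B. f c * c (2*j+1) x0)"
          unfolding dlt_def by (simp add: sum_subtractf right_diff_distrib)
        also have "\<dots> = 0" using ev by simp
        finally have s0: "(\<Sum>c\<in>B. f c * dlt j c) = 0" .
        have "(\<Sum>c\<in>B. f c * dlt j c) = (\<Sum>c\<in>B. if c = Gb r lam k j then 2 * f c else 0)"
        proof (rule sum.cong)
          fix c assume c: "c \<in> B"
          then consider "c = Cb r lam k" | "c = Sb r lam k" | j' where "j' \<in> J" "c = Gb r lam k j'"
            unfolding B_def SB_def by (auto split: if_splits)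
          then show "f c * dlt j c = (if c = Gb r lam k j then 2 * f c else 0)"
          proof cases
            case 1 then show ?thesis using dC[OF j] GneC[OF j] by auto
          next
            case 2 then show ?thesis using dC[OF j] GneC[OF j] by auto
          next
            case 3 then show ?thesis using dG[OF j, of j'] inj_on_eq_iff[OF Ginj 3(1) j] by auto
          qed
        qed simp
        also have "\<dots> = 2 * f (Gb r lam k j)" using GB finB by simp
        finally show ?thesis using s0 by simp
      qed
      have fC: "f (Cb r lam k) = 0" if s: "sym"
      proof -
        have "(\<Sum>c\<in>B. f c * c 0 0) = (\<Sum>c\<in>B. if c = Cb r lam k then f c else 0)"
        proof (rule sum.cong)
          fix c assume c: "c \<in> B"
          then consider "c = Cb r lam k" | "c = Sb r lam k" | j' where "j' \<in> J" "c = Gb r lam k j'"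
            unfolding B_def SB_def by (auto split: if_splits)
          then show "f c * c 0 0 = (if c = Cb r lam k then f c else 0)"
            by cases (use ev00 CneS GneC in auto)
        qed simp
        also have "\<dots> = f (Cb r lam k)" using s finB unfolding B_def SB_def by simp
        finally show ?thesis using ev by simp
      qed
      have fS: "f (Sb r lam k) = 0" if s: "sym"
      proof -
        have "(\<Sum>c\<in>B. f c * c 0 x1) = (\<Sum>c\<in>B. if c = Sb r lam k then f c * sin (k * x1) else 0)"
        proof (rule sum.cong)
          fix c assume c: "c \<in> B"
          then consider "c = Cb r lam k" | "c = Sb r lam k" | j' where "j' \<in> J" "c = Gb r lam k j'"
            unfolding B_def SB_def by (auto split: if_splits)
          then show "f c * c 0 x1 = (if c = Sb r lam k then f c * sin (k * x1) else 0)"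
            by cases (use fC[OF s] fG Sx1 CneS GneC in auto)
        qed simp
        also have "\<dots> = f (Sb r lam k) * sin (k * x1)" using s finB unfolding B_def SB_def by simp
        finally show ?thesis using ev sx1 by simp
      qed
      from b consider "sym" "b = Cb r lam k" | "sym" "b = Sb r lam k" | j where "j \<in> J" "b = Gb r lam k j"
        unfolding B_def SB_def by (auto split: if_splits)
      then show "f b = 0" by cases (use fC fS fG in auto)
    qed
    have dimV: "fvs.dim V = card B" using fvs.dim_unique[OF BV VB indep refl] .
    have c1: "(if \<exists>N::nat. N > 0 \<and> k = 4 * pi * real N / L then 2 else 0) = card SB"
      unfolding cardSB sym_def L_def using sym_iff[OF k PP] by simp
    have c2: "(\<Sum>Li \<in> lam ` {..<r}. if \<exists>N::nat. N > 0 \<and> k = 2 * pi * real N / Li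
              then card {j. j < r \<and> lam j = Li} else 0) = card J"
      unfolding J_def by (rule count_lemma[symmetric]) (use anti_iff[OF k] lampos in auto)
    show ?thesis unfolding mult dimV cardB c1[symmetric] c2[symmetric] using False by simp
  qed
qed


end
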